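(* Let $\mathcal{H}$ be a separable infinite-dimensional complex Hilbert space and let $T\in\mathcal{B}(\mathcal{H})$ be quasinilpotent. Then the power set $\Lambda(T)$ is right closed; that is, $\sup Y\in\Lambda(T)$ for every nonempty subset $Y\subseteq\Lambda(T)$.
   Context: An operator $T\in\mathcal{B}(\mathcal{H})$ is quasinilpotent if $\sigma(T)=\{0\}$. For quasinilpotent $T$ and $x\in\mathcal{H}\setminus\{0\}$, set $k_x=k_x(T)=\limsup_{\lambda\to0}\frac{\ln\|(\lambda-T)^{-1}x\|}{\ln\|(\lambda-T)^{-1}\|}$, and define the power set $\Lambda(T)=\{k_x: x\neq0\}$ (it is a subset of $[0,1]$). A nonempty set $X\subseteq\mathbb{R}$ is called right closed if $\sup Y\in X$ for every nonempty bounded subset $Y$ of $X$. *)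

theory Defs
  imports "HOL-Analysis.Analysis" "HOL-Library.Liminf_Limsup"
begin

text \<open>A complex Hilbert space is modelled as a real Hilbert space (a type of class
  real_inner and complete_space) equipped with an orthogonal complex structure J
  (J real-linear, J (J x) = - x, J preserves the inner product). Complex scalar
  multiplication is (a + b i) x = a x + b J x, and the complex inner product is
  inner x y + i inner x (J y); its norm coincides with the real norm.\<close>

definition complex_structure :: "('h::real_inner \<Rightarrow> 'h) \<Rightarrow> bool" where
  "complex_structure J \<longleftrightarrow> linear J \<and> (\<forall>x. J (J x) = - x) \<and> (\<forall>x y. inner (J x) (J y) = inner x y)"

definition scaleJ :: "('h::real_vector \<Rightarrow> 'h) \<Rightarrow> complex \<Rightarrow> 'h \<Rightarrow> 'h" where
  "scaleJ J c x = Re c *\<^sub>R x + Im c *\<^sub>R J x"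

text \<open>Bounded complex-linear operators on H: bounded real-linear maps commuting with J
  (equivalently, with complex scalar multiplication).\<close>
definition cbounded :: "('h::real_normed_vector \<Rightarrow> 'h) \<Rightarrow> ('h \<Rightarrow> 'h) \<Rightarrow> bool" where
  "cbounded J T \<longleftrightarrow> bounded_linear T \<and> (\<forall>x. T (J x) = J (T x))"

definition cinvertible :: "('h::real_normed_vector \<Rightarrow> 'h) \<Rightarrow> ('h \<Rightarrow> 'h) \<Rightarrow> bool" where
  "cinvertible J A \<longleftrightarrow> (\<exists>S. cbounded J S \<and> S \<circ> A = id \<and> A \<circ> S = id)"

definition shiftop :: "('h::real_normed_vector \<Rightarrow> 'h) \<Rightarrow> ('h \<Rightarrow> 'h) \<Rightarrow> complex \<Rightarrow> 'h \<Rightarrow> 'h" where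
  "shiftop J T l = (\<lambda>x. scaleJ J l x - T x)"

definition cspectrum :: "('h::real_normed_vector \<Rightarrow> 'h) \<Rightarrow> ('h \<Rightarrow> 'h) \<Rightarrow> complex set" where
  "cspectrum J T = {l. \<not> cinvertible J (shiftop J T l)}"

definition quasinilpotent :: "('h::real_normed_vector \<Rightarrow> 'h) \<Rightarrow> ('h \<Rightarrow> 'h) \<Rightarrow> bool" where
  "quasinilpotent J T \<longleftrightarrow> cbounded J T \<and> cspectrum J T = {0}"

definition resolvent :: "('h::real_normed_vector \<Rightarrow> 'h) \<Rightarrow> ('h \<Rightarrow> 'h) \<Rightarrow> complex \<Rightarrow> 'h \<Rightarrow> 'h" where
  "resolvent J T l = inv (shiftop J T l)"

definition kx :: "('h::real_normed_vector \<Rightarrow> 'h) \<Rightarrow> ('h \<Rightarrow> 'h) \<Rightarrow> 'h \<Rightarrow> real" where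
  "kx J T x = real_of_ereal (Limsup (at (0::complex))
      (\<lambda>l. ereal (ln (norm (resolvent J T l x)) / ln (onorm (resolvent J T l)))))"

definition power_set :: "('h::real_normed_vector \<Rightarrow> 'h) \<Rightarrow> ('h \<Rightarrow> 'h) \<Rightarrow> real set" where
  "power_set J T = {kx J T x | x. x \<noteq> 0}"

definition right_closed :: "real set \<Rightarrow> bool" where
  "right_closed X \<longleftrightarrow> X \<noteq> {} \<and> (\<forall>Y. Y \<noteq> {} \<and> Y \<subseteq> X \<and> bdd_above Y \<and> bdd_below Y \<longrightarrow> Sup Y \<in> X)"

end

theory Submission
  imports Defs
begin

locale qn =
  fixes J :: "'h::{real_inner, complete_space} \<Rightarrow> 'h" and T :: "'h \<Rightarrow> 'h"
  assumes cs: "complex_structure J" and qn: "quasinilpotent J T"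
begin

abbreviation "A \<equiv> shiftop J T"
abbreviation "R \<equiv> resolvent J T"
abbreviation "N l \<equiv> onorm (R l)"

lemma J_lin: "linear J" using cs by (simp add: complex_structure_def)
lemma JJ: "J (J x) = - x" using cs by (simp add: complex_structure_def)
lemma J_inner: "inner (J x) (J y) = inner x y" using cs by (simp add: complex_structure_def)

lemma J_norm: "norm (J x) = norm x"
  by (simp add: norm_eq_sqrt_inner J_inner)

lemma inner_J: "inner x (J x) = 0"
proof -
  have "inner (J x) (J (J x)) = inner x (J x)" by (rule J_inner)
  hence "inner (J x) (- x) = inner x (J x)" by (simp add: JJ)
  hence "- inner x (J x) = inner x (J x)" by (simp add: inner_commute)
  thus ?thesis by simp
qed

lemma norm_scaleJ: "norm (scaleJ J c x) = cmod c * norm x"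
proof -
  have "(norm (scaleJ J c x))\<^sup>2 = (Re c)\<^sup>2 * (norm x)\<^sup>2 + (Im c)\<^sup>2 * (norm (J x))\<^sup>2"
    unfolding scaleJ_def power2_norm_eq_inner
    by (simp add: inner_add_left inner_add_right inner_J inner_commute[of "J x" x] power2_eq_square algebra_simps)
  also have "\<dots> = (cmod c * norm x)\<^sup>2"
    by (simp add: J_norm cmod_def power_mult_distrib algebra_simps)
  finally show ?thesis
    by (simp add: power2_eq_iff_nonneg)
qed

lemma scaleJ_lin: "linear (scaleJ J c)"
proof -
  interpret l: linear J by (rule J_lin)
  show ?thesis
    by unfold_locales (simp_all add: scaleJ_def l.add l.scale algebra_simps)
qed

lemma scaleJ_diff: "scaleJ J a x - scaleJ J b x = scaleJ J (a - b) x"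
  by (simp add: scaleJ_def algebra_simps)

lemma scaleJ_0[simp]: "scaleJ J 0 x = 0" by (simp add: scaleJ_def)
lemma scaleJ_x0[simp]: "scaleJ J c 0 = 0"
  using linear_0[OF scaleJ_lin] by simp

lemma T_bl: "bounded_linear T" and T_J: "T (J x) = J (T x)"
  using qn by (auto simp: quasinilpotent_def cbounded_def)

lemma spec0: "cspectrum J T = {0}" using qn by (simp add: quasinilpotent_def)

lemma A_lin: "linear (A l)"
proof -
  interpret s: linear "scaleJ J l" by (rule scaleJ_lin)
  interpret t: bounded_linear T by (rule T_bl)
  show ?thesis unfolding shiftop_def
    by unfold_locales (simp_all add: s.add s.scale t.add t.scale algebra_simps)
qed

lemma A_diff: "A l x - A m x = scaleJ J (l - m) x"
  by (simp add: shiftop_def scaleJ_diff[symmetric])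

lemma norm_A: "norm (A l x) \<le> (cmod l + onorm T) * norm x"
proof -
  have "norm (A l x) \<le> norm (scaleJ J l x) + norm (T x)"
    unfolding shiftop_def by (rule norm_triangle_ineq4)
  also have "\<dots> \<le> cmod l * norm x + onorm T * norm x"
    using onorm[OF T_bl, of x] by (simp add: norm_scaleJ)
  finally show ?thesis by (simp add: algebra_simps)
qed

lemma R_props:
  assumes "l \<noteq> 0"
  shows "bounded_linear (R l)" "\<And>x. R l (A l x) = x" "\<And>y. A l (R l y) = y"
proof -
  have "l \<notin> cspectrum J T" using spec0 assms by auto
  then obtain S where S: "cbounded J S" "S \<circ> A l = id" "A l \<circ> S = id"
    by (auto simp: cspectrum_def cinvertible_def)
  have "R l = S" unfolding resolvent_def by (rule inv_unique_comp) (use S in auto)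
  thus "bounded_linear (R l)" "\<And>x. R l (A l x) = x" "\<And>y. A l (R l y) = y"
    unfolding \<open>R l = S\<close> using S by (simp_all add: cbounded_def fun_eq_iff)
qed

lemma R_le: "l \<noteq> 0 \<Longrightarrow> norm (R l y) \<le> N l * norm y"
  by (rule onorm[OF R_props(1)])

lemma R_lower: "l \<noteq> 0 \<Longrightarrow> norm y \<le> (cmod l + onorm T) * norm (R l y)"
  using norm_A[of l "R l y"] R_props(3)[of l y] by simp

lemma R_0: "l \<noteq> 0 \<Longrightarrow> R l 0 = 0"
  using linear_0[OF bounded_linear.linear[OF R_props(1)]] by simp

lemma R_nz: "l \<noteq> 0 \<Longrightarrow> y \<noteq> 0 \<Longrightarrow> R l y \<noteq> 0"
  using R_props(3)[of l y] linear_0[OF A_lin, of l] by force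

lemma N_nonneg: "l \<noteq> 0 \<Longrightarrow> 0 \<le> N l"
  by (rule onorm_pos_le[OF R_props(1)])

end


lemma le_zero_from_seq:
  fixes a c :: real
  assumes "\<And>k. a \<le> c / (real k + 1)"
  shows "a \<le> 0"
proof (rule ccontr)
  assume "\<not> a \<le> 0" hence a: "a > 0" by simp
  obtain n :: nat where n: "c / a < real n" using reals_Archimedean2 by blast
  have "c < real n * a" using n a by (simp add: divide_less_eq)
  hence "c / (real n + 1) < a" using a
    by (simp add: divide_less_eq algebra_simps)
  with assms[of n] show False by simp
qed

context qn begin

lemma N_big: "eventually (\<lambda>l. N l > K) (at 0)"
proof (rule ccontr)
  define B where "B = max K 1"
  assume "\<not> eventually (\<lambda>l. N l > K) (at 0)"
  hence ne: "\<not> eventually (\<lambda>l. N l > B) (at 0)"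
    by (metis (mono_tags, lifting) B_def eventually_mono max.strict_boundedE)
  have B1: "B \<ge> 1" by (simp add: B_def)
  have "\<forall>k::nat. \<exists>l. l \<noteq> 0 \<and> cmod l < 1 / (real k + 1) \<and> N l \<le> B"
  proof
    fix k :: nat
    have p: "1 / (real k + 1) > 0" by simp
    have "\<forall>d. d \<le> 0 \<or> (\<exists>x. x \<noteq> 0 \<and> cmod x < d \<and> N x \<le> B)"
      using ne unfolding eventually_at by (auto simp: not_less)
    from spec[OF this, of "1 / (real k + 1)"] p
    show "\<exists>l. l \<noteq> 0 \<and> cmod l < 1 / (real k + 1) \<and> N l \<le> B" by auto
  qed
  then obtain m where m: "\<And>k. m k \<noteq> 0" "\<And>k. cmod (m k) < 1 / (real k + 1)" "\<And>k. N (m k) \<le> B"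
    by metis
  interpret t: bounded_linear T by (rule T_bl)
  have below: "norm x \<le> B * norm (T x)" for x
  proof -
    have "norm x - B * norm (T x) \<le> (B * norm x) / (real k + 1)" for k
    proof -
      have "norm x = norm (R (m k) (A (m k) x))" using R_props(2)[OF m(1)] by simp
      also have "\<dots> \<le> N (m k) * norm (A (m k) x)" by (rule R_le[OF m(1)])
      also have "\<dots> \<le> B * norm (A (m k) x)"
        by (rule mult_right_mono[OF m(3)]) simp
      also have "norm (A (m k) x) \<le> cmod (m k) * norm x + norm (T x)"
        unfolding shiftop_def using norm_triangle_ineq4[of "scaleJ J (m k) x" "T x"]
        by (simp add: norm_scaleJ)
      also have "cmod (m k) * norm x \<le> norm x / (real k + 1)"
      proof -
        have "cmod (m k) * norm x \<le> (1 / (real k + 1)) * norm x"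
          using m(2)[of k] by (intro mult_right_mono) auto
        thus ?thesis by simp
      qed
      finally have "norm x \<le> B * (norm x / (real k + 1) + norm (T x))"
        using B1 by (simp add: mult_left_mono)
      thus ?thesis by (simp add: algebra_simps)
    qed
    from le_zero_from_seq[OF this] show ?thesis by simp
  qed
  have injT: "T a = T b \<Longrightarrow> a = b" for a b
    using below[of "a - b"] B1 by (simp add: t.diff)
  have surj: "\<exists>x. T x = - y" for y
  proof -
    define x where "x k = R (m k) y" for k
    have xb: "norm (x k) \<le> B * norm y" for k
      unfolding x_def using R_le[OF m(1), of k y] m(3)[of k]
      by (meson mult_right_mono norm_ge_zero order_trans)
    have Tx: "T (x k) = scaleJ J (m k) (x k) - y" for k
      using R_props(3)[OF m(1), of k y] unfolding x_def shiftop_def by (simp add: algebra_simps)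
    have sm: "norm (scaleJ J (m k) (x k)) \<le> B * norm y / (real k + 1)" for k
    proof -
      have "norm (scaleJ J (m k) (x k)) = cmod (m k) * norm (x k)" by (simp add: norm_scaleJ)
      also have "\<dots> \<le> (1 / (real k + 1)) * (B * norm y)"
        using m(2)[of k] xb[of k] by (intro mult_mono) auto
      finally show ?thesis by simp
    qed
    have "Cauchy x"
    proof (rule metric_CauchyI)
      fix e :: real assume e: "e > 0"
      obtain M :: nat where M: "2 * B * B * norm y / e < real M" using reals_Archimedean2 by blast
      have M': "2 * B * B * norm y / (real M + 1) < e"
        using M e by (simp add: divide_less_eq field_simps)
      show "\<exists>M. \<forall>m\<ge>M. \<forall>n\<ge>M. dist (x m) (x n) < e"
      proof (intro exI allI impI)
        fix i j assume ij: "M \<le> i" "M \<le> j"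
        have "dist (x i) (x j) \<le> B * norm (T (x i - x j))" by (simp add: dist_norm below)
        also have "T (x i - x j) = scaleJ J (m i) (x i) - scaleJ J (m j) (x j)"
          by (simp add: t.diff Tx)
        also have "B * norm \<dots> \<le> B * (B * norm y / (real i + 1) + B * norm y / (real j + 1))"
          using B1 norm_triangle_ineq4[of "scaleJ J (m i) (x i)" "scaleJ J (m j) (x j)"] sm[of i] sm[of j]
          by (intro mult_left_mono) auto
        also have "\<dots> \<le> B * (B * norm y / (real M + 1) + B * norm y / (real M + 1))"
          using ij B1 by (intro mult_left_mono add_mono divide_left_mono) auto
        also have "\<dots> = 2 * B * B * norm y / (real M + 1)"
        proof -
          have "real M + 1 > 0" by simp
          then show ?thesis by (simp add: divide_simps)
        qed
        finally show "dist (x i) (x j) < e" using M' by simp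
      qed
    qed
    then obtain z where z: "x \<longlonglongrightarrow> z" by (auto simp: Cauchy_convergent_iff convergent_def)
    have "(\<lambda>k. T (x k)) \<longlonglongrightarrow> T z" by (rule t.tendsto[OF z])
    moreover have "(\<lambda>k. T (x k)) \<longlonglongrightarrow> 0 - y"
    proof -
      have "(\<lambda>k. scaleJ J (m k) (x k)) \<longlonglongrightarrow> 0"
      proof (rule Lim_null_comparison[OF _ ])
        show "\<forall>\<^sub>F k in sequentially. norm (scaleJ J (m k) (x k)) \<le> B * norm y * (1 / (real k + 1))"
          using sm by simp
        show "(\<lambda>k. B * norm y * (1 / (real k + 1))) \<longlonglongrightarrow> 0"
          using LIMSEQ_inverse_real_of_nat
          by (intro tendsto_mult_right_zero) (simp add: inverse_eq_divide add.commute)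
      qed
      thus ?thesis unfolding Tx by (intro tendsto_diff) auto
    qed
    ultimately have "T z = - y" using LIMSEQ_unique by fastforce
    thus ?thesis by blast
  qed
  define S where "S y = (SOME x. T x = - y)" for y
  have TS: "T (S y) = - y" for y unfolding S_def using someI_ex[OF surj[of y]] .
  have A0: "A 0 x = - T x" for x by (simp add: shiftop_def)
  interpret j: linear J by (rule J_lin)
  have "cbounded J S"
    unfolding cbounded_def
  proof (intro conjI allI)
    show "bounded_linear S"
    proof (rule bounded_linear_intro[where K = B])
      show "S (a + b) = S a + S b" for a b by (rule injT) (simp add: TS t.add)
      show "S (r *\<^sub>R a) = r *\<^sub>R S a" for r a by (rule injT) (simp add: TS t.scale)
      show "norm (S a) \<le> norm a * B" for a using below[of "S a"] by (simp add: TS mult.commute)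
    qed
    show "S (J x) = J (S x)" for x by (rule injT) (simp add: TS T_J j.neg)
  qed
  moreover have "S \<circ> A 0 = id" by (rule ext) (simp add: A0, rule injT, simp add: TS)
  moreover have "A 0 \<circ> S = id" by (rule ext) (simp add: A0 TS)
  ultimately have "cinvertible J (A 0)" unfolding cinvertible_def by blast
  moreover have "0 \<in> cspectrum J T" using spec0 by simp
  ultimately show False by (simp add: cspectrum_def)
qed

end


context qn begin

lemma N_local:
  assumes l: "l \<noteq> 0" and m: "m \<noteq> 0" and d: "N l * cmod (m - l) \<le> 1/2"
  shows "N m \<le> 2 * N l"
proof (rule onorm_bound)
  show "0 \<le> 2 * N l" using N_nonneg[OF l] by simp
  fix y
  interpret rl: bounded_linear "R l" by (rule R_props(1)[OF l])
  have "A l (R m y) = y + scaleJ J (l - m) (R m y)"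
    using A_diff[of l "R m y" m] R_props(3)[OF m, of y] by (simp add: algebra_simps)
  hence "R m y = R l y + R l (scaleJ J (l - m) (R m y))"
    using R_props(2)[OF l, of "R m y"] by (simp add: rl.add)
  hence "norm (R m y) \<le> norm (R l y) + norm (R l (scaleJ J (l - m) (R m y)))"
    by (metis norm_triangle_ineq)
  also have "\<dots> \<le> N l * norm y + N l * (cmod (l - m) * norm (R m y))"
    using R_le[OF l, of y] R_le[OF l, of "scaleJ J (l - m) (R m y)"] by (simp add: norm_scaleJ)
  also have "N l * (cmod (l - m) * norm (R m y)) \<le> 1/2 * norm (R m y)"
  proof -
    have "N l * cmod (l - m) \<le> 1/2" using d by (simp add: norm_minus_commute)
    hence "(N l * cmod (l - m)) * norm (R m y) \<le> 1/2 * norm (R m y)"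
      by (intro mult_right_mono) auto
    thus ?thesis by (simp add: mult.assoc)
  qed
  finally show "norm (R m y) \<le> 2 * N l * norm y" by simp
qed

lemma N_annulus:
  assumes "\<delta> > 0"
  shows "\<exists>B. \<forall>l. \<delta> \<le> cmod l \<longrightarrow> cmod l \<le> 1 \<longrightarrow> N l \<le> B"
proof -
  define K where "K = cball (0::complex) 1 - ball 0 \<delta>"
  have cK: "compact K" unfolding K_def by (intro compact_diff) auto
  define r where "r l = min (\<delta>/2) (1 / (2 * (N l + 1)))" for l
  have K0: "l \<in> K \<Longrightarrow> l \<noteq> 0" for l using assms by (auto simp: K_def)
  have rpos: "l \<in> K \<Longrightarrow> r l > 0" for l
    using N_nonneg[OF K0, of l] assms by (auto simp: r_def)
  have "K \<subseteq> (\<Union>l\<in>K. ball l (r l))" using rpos by auto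
  from compactE_image[OF cK _ this] obtain C where C: "C \<subseteq> K" "finite C" "K \<subseteq> (\<Union>l\<in>C. ball l (r l))"
    by blast
  define B where "B = Max (insert 0 ((\<lambda>l. 2 * N l) ` C))"
  have "N m \<le> B" if "\<delta> \<le> cmod m" "cmod m \<le> 1" for m
  proof -
    have "m \<in> K" using that by (auto simp: K_def)
    then obtain l where l: "l \<in> C" "m \<in> ball l (r l)" using C by auto
    have lK: "l \<in> K" using l C by auto
    have m0: "m \<noteq> 0" using that assms by auto
    have Nl: "0 \<le> N l" using N_nonneg[OF K0[OF lK]] .
    have "cmod (m - l) < 1 / (2 * (N l + 1))"
      using l(2) by (simp add: r_def dist_norm norm_minus_commute)
    hence "N l * cmod (m - l) \<le> N l * (1 / (2 * (N l + 1)))"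
      using Nl by (intro mult_left_mono) auto
    also have "\<dots> \<le> 1/2" using Nl by (simp add: field_simps)
    finally have "N m \<le> 2 * N l" by (rule N_local[OF K0[OF lK] m0])
    also have "\<dots> \<le> B" unfolding B_def using C(2) l(1) by (intro Max_ge) auto
    finally show ?thesis .
  qed
  thus ?thesis by blast
qed

end


lemma ereal_eqI_eps:
  fixes L :: ereal
  assumes "\<And>e. e > 0 \<Longrightarrow> L \<le> ereal (s + e)" "\<And>e. e > 0 \<Longrightarrow> ereal (s - e) \<le> L"
  shows "L = ereal s"
proof (cases L)
  case (real r)
  have "r \<le> s + e" if "e > 0" for e using assms(1)[OF that] real by simp
  hence "r \<le> s" by (rule field_le_epsilon)
  moreover have "s \<le> r + e" if "e > 0" for e using assms(2)[OF that] real by simp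
  hence "s \<le> r" by (rule field_le_epsilon)
  ultimately show ?thesis using real by simp
next
  case PInf thus ?thesis using assms(1)[of 1] by simp
next
  case MInf thus ?thesis using assms(2)[of 1] by simp
qed

context qn begin

definition f :: "'h \<Rightarrow> complex \<Rightarrow> real" where
  "f x l = ln (norm (R l x)) / ln (N l)"

lemma kx_f: "kx J T x = real_of_ereal (Limsup (at 0) (\<lambda>l. ereal (f x l)))"
  by (simp add: kx_def f_def)

lemma lnN_big: "eventually (\<lambda>l. ln (N l) > K) (at 0)"
  using N_big[of "exp K"]
proof eventually_elim
  case (elim l)
  have "0 < N l" using elim by (meson exp_gt_zero less_trans)
  thus ?case using elim by (metis exp_gt_zero ln_exp ln_less_cancel_iff)
qed

lemma r0_ex: "\<exists>r0>0. r0 \<le> 1 \<and> (\<forall>l. l \<noteq> 0 \<longrightarrow> cmod l < r0 \<longrightarrow> N l \<ge> 2)"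
proof -
  obtain d where d: "d > 0" "\<forall>l. l \<noteq> 0 \<and> dist l 0 < d \<longrightarrow> N l > 2"
    using N_big[of 2] unfolding eventually_at by blast
  show ?thesis using d by (intro exI[of _ "min d 1"]) auto
qed

lemma near0: assumes "r > 0" shows "eventually (\<lambda>l. l \<noteq> 0 \<and> cmod l < r) (at 0)"
  using assms unfolding eventually_at by (intro exI[of _ r]) auto

lemma f_upper_ev: assumes "x \<noteq> 0" shows "eventually (\<lambda>l. f x l \<le> 2) (at 0)"
  using near0[of 1, simplified] N_big[of 2] lnN_big[of "\<bar>ln (norm x)\<bar>"]
proof eventually_elim
  case (elim l)
  have l0: "l \<noteq> 0" using elim by simp
  have Rx: "0 < norm (R l x)" using R_nz[OF l0 assms] by simp
  have lnN: "ln (N l) > 0" using elim by simp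
  have "ln (norm (R l x)) \<le> ln (N l * norm x)"
    using R_le[OF l0, of x] Rx by (intro ln_mono) auto
  also have "\<dots> = ln (N l) + ln (norm x)" using elim assms by (simp add: ln_mult)
  also have "\<dots> \<le> 2 * ln (N l)" using elim by simp
  finally show ?case unfolding f_def using lnN by (simp add: divide_le_eq)
qed

lemma f_lower_ev: assumes "x \<noteq> 0" "e > 0" shows "eventually (\<lambda>l. f x l \<ge> - e) (at 0)"
proof -
  define c where "c = ln (norm x / (1 + onorm T))"
  have T0: "0 \<le> onorm T" by (rule onorm_pos_le[OF T_bl])
  show ?thesis
  using near0[of 1, simplified] N_big[of 2] lnN_big[of "\<bar>c\<bar> / e"]
  proof eventually_elim
    case (elim l)
    have l0: "l \<noteq> 0" using elim by simp
    have Rx: "0 < norm (R l x)" using R_nz[OF l0 assms(1)] by simp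
    have lnN: "ln (N l) > 0" using elim by simp
    have "norm x \<le> (cmod l + onorm T) * norm (R l x)" by (rule R_lower[OF l0])
    also have "\<dots> \<le> (1 + onorm T) * norm (R l x)"
      using elim by (intro mult_right_mono) auto
    finally have "norm x / (1 + onorm T) \<le> norm (R l x)" using T0 by (simp add: divide_le_eq mult.commute)
    hence "c \<le> ln (norm (R l x))" unfolding c_def using assms T0 by (intro ln_mono) auto
    hence "c / ln (N l) \<le> f x l" unfolding f_def using lnN by (simp add: divide_right_mono)
    moreover have "- e \<le> c / ln (N l)"
    proof -
      have "\<bar>c\<bar> < e * ln (N l)" using elim assms(2) by (simp add: divide_less_eq mult.commute)
      hence "- e * ln (N l) \<le> c" by linarith
      thus ?thesis using lnN by (simp add: le_divide_eq)
    qed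
    ultimately show ?case by linarith
  qed
qed

lemma kx_fin: assumes "x \<noteq> 0"
  shows "Limsup (at 0) (\<lambda>l. ereal (f x l)) = ereal (kx J T x)" "0 \<le> kx J T x"
proof -
  define L where "L = Limsup (at (0::complex)) (\<lambda>l. ereal (f x l))"
  have up: "L \<le> ereal 2" unfolding L_def
    by (rule Limsup_bounded) (use f_upper_ev[OF assms] in \<open>auto elim: eventually_mono\<close>)
  have lo: "ereal (- e) \<le> L" if "e > 0" for e unfolding L_def
    by (rule le_Limsup) (use f_lower_ev[OF assms that] in \<open>auto elim: eventually_mono\<close>)
  have lo0: "0 \<le> L"
  proof (cases L)
    case (real r)
    have "0 \<le> r + e" if "e > 0" for e using lo[OF that] real by simp
    thus ?thesis using real field_le_epsilon[of 0 r] by simp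
  qed (use up lo[of 1] in auto)
  obtain r where r: "L = ereal r" using up lo0 by (cases L) auto
  have "kx J T x = r" unfolding kx_f L_def[symmetric] r by simp
  thus "Limsup (at 0) (\<lambda>l. ereal (f x l)) = ereal (kx J T x)" "0 \<le> kx J T x"
    using r lo0 L_def by auto
qed

lemma kE1: assumes "x \<noteq> 0" "e > 0" shows "eventually (\<lambda>l. f x l < kx J T x + e) (at 0)"
proof -
  have "Limsup (at 0) (\<lambda>l. ereal (f x l)) < ereal (kx J T x + e)"
    using kx_fin(1)[OF assms(1)] assms(2) by simp
  from Limsup_lessD[OF this] show ?thesis by simp
qed

lemma kE2: assumes "x \<noteq> 0" "e > 0" "eventually P (at 0)"
  shows "\<exists>l. P l \<and> f x l > kx J T x - e"
proof (rule ccontr)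
  assume "\<not> ?thesis"
  hence "eventually (\<lambda>l. ereal (f x l) \<le> ereal (kx J T x - e)) (at 0)"
    using assms(3) by (auto elim: eventually_mono simp: not_less)
  hence "Limsup (at 0) (\<lambda>l. ereal (f x l)) \<le> ereal (kx J T x - e)" by (rule Limsup_bounded)
  thus False using kx_fin(1)[OF assms(1)] assms(2) by simp
qed

lemma kI:
  assumes "\<And>e. e > 0 \<Longrightarrow> eventually (\<lambda>l. f x l \<le> s + e) (at 0)"
    and "\<And>e P. e > 0 \<Longrightarrow> eventually P (at 0) \<Longrightarrow> \<exists>l. P l \<and> f x l \<ge> s - e"
  shows "kx J T x = s"
proof -
  have "Limsup (at 0) (\<lambda>l. ereal (f x l)) = ereal s"
  proof (rule ereal_eqI_eps)
    fix e :: real assume e: "e > 0"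
    show "Limsup (at 0) (\<lambda>l. ereal (f x l)) \<le> ereal (s + e)"
      by (rule Limsup_bounded) (use assms(1)[OF e] in \<open>auto elim: eventually_mono\<close>)
    show "ereal (s - e) \<le> Limsup (at 0) (\<lambda>l. ereal (f x l))"
    proof (rule ccontr)
      assume "\<not> ?thesis"
      hence "Limsup (at 0) (\<lambda>l. ereal (f x l)) < ereal (s - e)" by simp
      from Limsup_lessD[OF this] have "eventually (\<lambda>l. f x l < s - e) (at 0)" by simp
      from assms(2)[OF e this] show False by auto
    qed
  qed
  thus ?thesis unfolding kx_f by simp
qed

end


lemma H_lt:
  fixes N v b :: real
  assumes "N > 1" "v > 0" "ln v / ln N < b" shows "v < N powr b"
proof -
  have "ln N > 0" using assms by simp
  hence "ln v < b * ln N" using assms by (simp add: divide_less_eq)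
  also have "\<dots> = ln (N powr b)" using assms by (simp add: ln_powr)
  finally have "ln v < ln (N powr b)" .
  moreover have "N powr b > 0" using assms by simp
  ultimately show ?thesis using assms(2) ln_less_cancel_iff by blast
qed

lemma H_gt:
  fixes N v b :: real
  assumes "N > 1" "v > 0" "ln v / ln N > b" shows "v > N powr b"
proof -
  have "ln N > 0" using assms by simp
  hence "ln v > b * ln N" using assms by (simp add: less_divide_eq)
  moreover have "b * ln N = ln (N powr b)" using assms by (simp add: ln_powr)
  ultimately have "ln (N powr b) < ln v" by linarith
  moreover have "N powr b > 0" using assms by simp
  ultimately show ?thesis using assms(2) ln_less_cancel_iff by blast
qed

lemma H_ge:
  fixes N v b :: real
  assumes "N > 1" "v \<ge> N powr b" shows "ln v / ln N \<ge> b"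
proof -
  have lN: "ln N > 0" using assms by simp
  have p: "N powr b > 0" using assms by simp
  have "b * ln N = ln (N powr b)" using assms by (simp add: ln_powr)
  also have "\<dots> \<le> ln v" using p assms by (intro ln_mono) auto
  finally show ?thesis using lN by (simp add: le_divide_eq)
qed

lemma H_le:
  fixes N v C s :: real
  assumes "N > 1" "v > 0" "C > 0" "v \<le> C * N powr s" shows "ln v / ln N \<le> s + ln C / ln N"
proof -
  have lN: "ln N > 0" using assms by simp
  have "ln v \<le> ln (C * N powr s)" using assms by (intro ln_mono) auto
  also have "\<dots> = ln C + s * ln N" using assms by (simp add: ln_mult ln_powr)
  finally have "ln v \<le> ln C + s * ln N" .
  hence "ln v / ln N \<le> (ln C + s * ln N) / ln N" using lN by (rule divide_right_mono[OF _ less_imp_le])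
  also have "\<dots> = s + ln C / ln N" using lN by (simp add: add_divide_distrib)
  finally show ?thesis .
qed

lemma geom_sum_le2: "(\<Sum>i<k. (1/2::real)^i) \<le> 2"
proof -
  have "(\<Sum>i<k. (1/2::real)^i) = 2 * (1 - (1/2)^k)"
    by (simp add: sum_gp_strict)
  also have "\<dots> \<le> 2" by simp
  finally show ?thesis .
qed

lemma geom_suminf2: "(\<Sum>i. (1/2::real)^i) = 2"
  using suminf_geometric[of "1/2::real"] by simp


lemma summable_cmp:
  fixes f :: "nat \<Rightarrow> 'a::{real_normed_vector, complete_space}"
  assumes fg: "\<And>n. norm (f n) \<le> g n" and g: "summable g"
  shows "summable f"
proof -
  have G: "Cauchy (\<lambda>n. \<Sum>i<n. g i)" using g by (simp add: summable_iff_convergent Cauchy_convergent_iff)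
  have key: "dist (\<Sum>i<m. f i) (\<Sum>i<n. f i) \<le> dist (\<Sum>i<m. g i) (\<Sum>i<n. g i)" if "m \<le> n" for m n
  proof -
    have "(\<Sum>i<n. f i) - (\<Sum>i<m. f i) = sum f {m..<n}"
      using sum_diff_nat_ivl[OF _ that, of 0 f] by (simp add: atLeast0LessThan)
    moreover have "(\<Sum>i<n. g i) - (\<Sum>i<m. g i) = sum g {m..<n}"
      using sum_diff_nat_ivl[OF _ that, of 0 g] by (simp add: atLeast0LessThan)
    moreover have "norm (sum f {m..<n}) \<le> sum g {m..<n}" by (rule sum_norm_le) (use fg in auto)
    ultimately show ?thesis by (simp add: dist_norm norm_minus_commute[of "sum f {..<m}"] dist_real_def)
  qed
  have "Cauchy (\<lambda>n. \<Sum>i<n. f i)"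
  proof (rule metric_CauchyI)
    fix e :: real assume e: "e > 0"
    from metric_CauchyD[OF G e] obtain M where M: "\<And>m n. M \<le> m \<Longrightarrow> M \<le> n \<Longrightarrow> dist (\<Sum>i<m. g i) (\<Sum>i<n. g i) < e"
      by blast
    show "\<exists>M. \<forall>m\<ge>M. \<forall>n\<ge>M. dist (\<Sum>i<m. f i) (\<Sum>i<n. f i) < e"
    proof (intro exI allI impI)
      fix m n assume mn: "M \<le> m" "M \<le> n"
      show "dist (\<Sum>i<m. f i) (\<Sum>i<n. f i) < e"
      proof (cases "m \<le> n")
        case True thus ?thesis using key[OF True] M[OF mn] by linarith
      next
        case False hence nm: "n \<le> m" by simp
        show ?thesis using key[OF nm] M[OF mn(2) mn(1)] by (simp add: dist_commute)
      qed
    qed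
  qed
  thus ?thesis by (simp add: summable_iff_convergent Cauchy_convergent_iff)
qed

lemma norm_suminf_le':
  fixes f :: "nat \<Rightarrow> 'a::{real_normed_vector, complete_space}"
  assumes fg: "\<And>n. norm (f n) \<le> g n" and g: "summable g"
  shows "norm (suminf f) \<le> suminf g"
proof -
  have sf: "summable f" by (rule summable_cmp[OF fg g])
  have lim: "(\<lambda>n. norm (\<Sum>i<n. f i)) \<longlonglongrightarrow> norm (suminf f)"
    by (intro tendsto_norm summable_LIMSEQ sf)
  have g0: "0 \<le> g n" for n using fg[of n] norm_ge_zero order_trans by blast
  have "norm (\<Sum>i<n. f i) \<le> suminf g" for n
  proof -
    have "norm (\<Sum>i<n. f i) \<le> (\<Sum>i<n. g i)" by (rule sum_norm_le) (use fg in auto)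
    also have "\<dots> \<le> suminf g" by (rule sum_le_suminf[OF g]) (use g0 in auto)
    finally show ?thesis .
  qed
  thus ?thesis using lim by (intro LIMSEQ_le_const2) auto
qed



context qn begin

lemma main:
  assumes Yne: "Y \<noteq> {}" and Ysub: "Y \<subseteq> power_set J T" and Ybdd: "bdd_above Y"
    and notin: "Sup Y \<notin> Y"
  shows "Sup Y \<in> power_set J T"
proof -
  define s where "s = Sup Y"
  have below: "\<exists>y\<in>Y. t < y" if "t < s" for t
    using that less_cSup_iff[OF Yne Ybdd] unfolding s_def by blast
  have ys: "y \<in> Y \<Longrightarrow> y < s" for y
    using cSup_upper[OF _ Ybdd, of y] notin unfolding s_def by (cases "y = Sup Y") auto
  define g where "g t = (SOME y. y \<in> Y \<and> t < y)" for t
  have g: "t < s \<Longrightarrow> g t \<in> Y \<and> t < g t" for t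
    unfolding g_def using below by (metis (mono_tags, lifting) someI_ex)
  define al where "al = rec_nat (g (s - 1)) (\<lambda>n a. g (max a (s - 1 / (real (Suc n) + 1))))"
  have al0: "al 0 = g (s - 1)" and alS: "al (Suc n) = g (max (al n) (s - 1 / (real (Suc n) + 1)))" for n
    by (simp_all add: al_def)
  have alY: "al n \<in> Y \<and> s - 1 / (real n + 1) < al n" for n
  proof (induction n)
    case 0 thus ?case using g[of "s - 1"] by (simp add: al0)
  next
    case (Suc n)
    have "max (al n) (s - 1 / (real (Suc n) + 1)) < s" using Suc ys by auto
    from g[OF this] show ?case unfolding alS by auto
  qed
  have al_lt_s: "al n < s" for n using alY ys by blast
  have al_inc: "al n < al (Suc n)" for n
  proof -
    have "max (al n) (s - 1 / (real (Suc n) + 1)) < s" using al_lt_s[of n] by simp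
    from g[OF this] have "max (al n) (s - 1 / (real (Suc n) + 1)) < al (Suc n)"
      unfolding alS by blast
    thus ?thesis by (metis max.strict_boundedE)
  qed
  have al_mono: "m \<le> n \<Longrightarrow> al m \<le> al n" for m n
    using lift_Suc_mono_le[of al, OF less_imp_le[OF al_inc]] by blast
  have "\<forall>n. \<exists>v. v \<noteq> 0 \<and> kx J T v = al n"
  proof
    fix n
    have "al n \<in> power_set J T" using alY[of n] Ysub by blast
    then obtain v where "v \<noteq> 0" "al n = kx J T v" unfolding power_set_def by blast
    thus "\<exists>v. v \<noteq> 0 \<and> kx J T v = al n" by metis
  qed
  then obtain yv where yv: "\<And>n. yv n \<noteq> 0" "\<And>n. kx J T (yv n) = al n" by metis
  have al_nn: "0 \<le> al n" for n using kx_fin(2)[OF yv(1)[of n]] yv(2) by simp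
  define be where "be n = (al n + al (Suc n)) / 2" for n
  define pp where "pp n = (be n + al (Suc n)) / 2" for n
  have be_lt: "al n < be n" "be n < pp n" "pp n < al (Suc n)" "be n < s" for n
    using al_inc[of n] al_lt_s[of "Suc n"] by (auto simp: be_def pp_def)
  have be_nn: "0 \<le> be n" for n using al_nn[of n] al_nn[of "Suc n"] by (simp add: be_def)
  have be_mono: "m \<le> n \<Longrightarrow> be m \<le> be n" for m n
    using al_mono[of m n] al_mono[of "Suc m" "Suc n"] by (simp add: be_def)
  obtain r0 where r0: "r0 > 0" "r0 \<le> 1" "\<And>l. l \<noteq> 0 \<Longrightarrow> cmod l < r0 \<Longrightarrow> N l \<ge> 2"
    using r0_ex by blast
  have Mex: "\<exists>M>0. \<forall>l. l \<noteq> 0 \<longrightarrow> cmod l < r0 \<longrightarrow> norm (R l (yv j)) \<le> M * N l powr be j" for j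
  proof -
    have "eventually (\<lambda>l. f (yv j) l < kx J T (yv j) + (be j - al j)) (at 0)"
      by (rule kE1[OF yv(1)]) (use be_lt[of j] in simp)
    hence "eventually (\<lambda>l. f (yv j) l < be j) (at 0)" unfolding yv(2) by simp
    then obtain d where d: "d > 0" "\<And>l. l \<noteq> 0 \<Longrightarrow> dist l 0 < d \<Longrightarrow> f (yv j) l < be j"
      unfolding eventually_at by auto
    obtain B where B: "\<And>l. min d r0 \<le> cmod l \<Longrightarrow> cmod l \<le> 1 \<Longrightarrow> N l \<le> B"
      using N_annulus[of "min d r0"] d r0 by auto
    define M where "M = 1 + \<bar>B\<bar> * norm (yv j)"
    have M1: "M \<ge> 1" by (simp add: M_def)
    have "norm (R l (yv j)) \<le> M * N l powr be j" if l: "l \<noteq> 0" "cmod l < r0" for l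
    proof -
      have N2: "N l \<ge> 2" using r0 l by simp
      have p1: "N l powr be j \<ge> 1" using N2 be_nn[of j] by (simp add: ge_one_powr_ge_zero)
      show ?thesis
      proof (cases "cmod l < d")
        case True
        have "norm (R l (yv j)) < N l powr be j"
          using d(2)[OF l(1)] True N2 R_nz[OF l(1) yv(1)] by (intro H_lt) (auto simp: f_def)
        also have "\<dots> \<le> M * N l powr be j"
          using mult_right_mono[OF M1, of "N l powr be j"] p1 by simp
        finally show ?thesis by simp
      next
        case False
        have "norm (R l (yv j)) \<le> N l * norm (yv j)" by (rule R_le[OF l(1)])
        also have "\<dots> \<le> \<bar>B\<bar> * norm (yv j)"
          using B[of l] False l r0 by (intro mult_right_mono) auto
        also have "\<dots> \<le> M" by (simp add: M_def)
        also have "\<dots> \<le> M * N l powr be j"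
          using mult_left_mono[OF p1, of M] M1 by simp
        finally show ?thesis .
      qed
    qed
    thus ?thesis using M1 by (intro exI[of _ M]) auto
  qed
  then obtain M where M: "\<And>j. M j > 0" "\<And>j l. l \<noteq> 0 \<Longrightarrow> cmod l < r0 \<Longrightarrow> norm (R l (yv j)) \<le> M j * N l powr be j"
    by metis
  define bw where "bw j = (1/2)^j / (M j + norm (yv j))" for j
  have bw_pos: "bw j > 0" for j using M(1)[of j] by (simp add: bw_def add_pos_nonneg)
  have bwM: "bw j * M j \<le> (1/2)^j" and bwy: "bw j * norm (yv j) \<le> (1/2)^j" for j
  proof -
    have D: "M j + norm (yv j) > 0" using M(1)[of j] by (simp add: add_pos_nonneg)
    have f1: "M j / (M j + norm (yv j)) \<le> 1" "norm (yv j) / (M j + norm (yv j)) \<le> 1"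
      using D M(1)[of j] by (simp_all add: divide_le_eq)
    have e1: "bw j * M j = (1/2)^j * (M j / (M j + norm (yv j)))"
      and e2: "bw j * norm (yv j) = (1/2)^j * (norm (yv j) / (M j + norm (yv j)))"
      by (simp_all add: bw_def)
    show "bw j * M j \<le> (1/2)^j" unfolding e1 using mult_left_mono[OF f1(1), of "(1/2)^j"] by simp
    show "bw j * norm (yv j) \<le> (1/2)^j" unfolding e2 using mult_left_mono[OF f1(2), of "(1/2)^j"] by simp
  qed
  define Q where "Q n d l \<longleftrightarrow> l \<noteq> 0 \<and> cmod l < min r0 (1 / (real n + 1)) \<and>
      N l powr pp n \<le> norm (R l (yv (Suc n))) \<and> 8 * N l powr be n \<le> bw (Suc n) * d * N l powr pp n"
    for n d l
  have Qex: "\<exists>l. Q n d l" if d: "d > 0" for n d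
  proof -
    define K where "K = (8 / (bw (Suc n) * d)) powr (1 / (pp n - be n))"
    have K0: "K \<ge> 0" by (simp add: K_def)
    have ev2: "eventually (\<lambda>l. 8 * N l powr be n \<le> bw (Suc n) * d * N l powr pp n) (at 0)"
      using N_big[of K]
    proof eventually_elim
      case (elim l)
      have Npos: "N l > 0" using elim K0 by linarith
      have dpos: "pp n - be n > 0" using be_lt[of n] by simp
      have bd: "bw (Suc n) * d > 0" using bw_pos d by simp
      have "K powr (pp n - be n) = 8 / (bw (Suc n) * d)"
        unfolding K_def using dpos bd by (simp add: powr_powr)
      moreover have "K powr (pp n - be n) < N l powr (pp n - be n)"
        using K0 elim dpos by (intro powr_less_mono2) auto
      ultimately have "8 / (bw (Suc n) * d) < N l powr (pp n - be n)" by simp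
      hence "8 < bw (Suc n) * d * N l powr (pp n - be n)" using bd by (simp add: divide_less_eq mult.commute)
      hence "8 * N l powr be n \<le> (bw (Suc n) * d * N l powr (pp n - be n)) * N l powr be n"
        by (intro mult_right_mono) auto
      also have "\<dots> = bw (Suc n) * d * N l powr pp n"
        using Npos by (simp add: mult.assoc powr_add[symmetric])
      finally show ?case .
    qed
    have r1: "min r0 (1 / (real n + 1)) > 0" using r0 by simp
    have "eventually (\<lambda>l. (l \<noteq> 0 \<and> cmod l < min r0 (1 / (real n + 1))) \<and>
        8 * N l powr be n \<le> bw (Suc n) * d * N l powr pp n) (at 0)"
      by (intro eventually_conj near0 r1 ev2)
    from kE2[OF yv(1)[of "Suc n"] _ this, of "al (Suc n) - pp n"]
    obtain l where l: "l \<noteq> 0" "cmod l < min r0 (1 / (real n + 1))"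
        "8 * N l powr be n \<le> bw (Suc n) * d * N l powr pp n" "f (yv (Suc n)) l > pp n"
      using be_lt[of n] yv(2)[of "Suc n"] by auto
    have N2: "N l \<ge> 2" using r0(3)[OF l(1)] l(2) by simp
    have "N l powr pp n < norm (R l (yv (Suc n)))"
      using l(4) N2 R_nz[OF l(1) yv(1)] by (intro H_gt) (auto simp: f_def)
    thus ?thesis using l unfolding Q_def by (intro exI[of _ l]) auto
  qed
  define lam where "lam n d = (SOME l. Q n d l)" for n d
  have lamQ: "d > 0 \<Longrightarrow> Q n d (lam n d)" for n d
    unfolding lam_def using Qex by (metis someI_ex)
  define ee where "ee = rec_nat 1 (\<lambda>n e. min e (bw (Suc n) * e * N (lam n e) powr (pp n - 1) / 4))"
  have ee0: "ee 0 = 1" and eeS: "ee (Suc n) = min (ee n) (bw (Suc n) * ee n * N (lam n (ee n)) powr (pp n - 1) / 4)" for n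
    by (simp_all add: ee_def)
  have ee_pos: "ee n > 0" for n
  proof (induction n)
    case 0 thus ?case by (simp add: ee0)
  next
    case (Suc n)
    have "Q n (ee n) (lam n (ee n))" by (rule lamQ[OF Suc])
    hence "N (lam n (ee n)) \<ge> 2" unfolding Q_def using r0(3) by auto
    hence "N (lam n (ee n)) powr (pp n - 1) > 0" by simp
    thus ?case unfolding eeS using Suc bw_pos[of "Suc n"] by simp
  qed
  define dd where "dd n = (case n of 0 \<Rightarrow> 1 | Suc m \<Rightarrow> ee m)" for n
  have dd_pos: "dd n > 0" for n by (cases n) (simp_all add: dd_def ee_pos)
  have dd_Suc: "dd (Suc n) \<le> dd n" for n
    by (cases n) (simp_all add: dd_def ee0 eeS)
  have dd_anti: "m \<le> n \<Longrightarrow> dd n \<le> dd m" for m n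
    using dd_Suc by (metis lift_Suc_antimono_le)
  have dd_le1: "dd n \<le> 1" for n using dd_anti[of 0 n] by (simp add: dd_def)
  define lmb where "lmb n = lam n (dd (Suc n))" for n
  have lmbQ: "Q n (dd (Suc n)) (lmb n)" for n unfolding lmb_def by (rule lamQ[OF dd_pos])
  have dd_SS: "dd (Suc (Suc n)) \<le> bw (Suc n) * dd (Suc n) * N (lmb n) powr (pp n - 1) / 4" for n
    by (simp add: dd_def eeS lmb_def)
  define cc where "cc j = bw j * dd j" for j
  have cc_pos: "cc j > 0" for j using bw_pos dd_pos by (simp add: cc_def)
  have ccy: "cc j * norm (yv j) \<le> (1/2)^j * dd j" for j
    using mult_right_mono[OF bwy[of j], of "dd j"] dd_pos[of j] by (simp add: cc_def mult.commute mult.left_commute)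
  have ccM: "cc j * M j \<le> (1/2)^j" for j
  proof -
    have "cc j * M j = (bw j * M j) * dd j" by (simp add: cc_def algebra_simps)
    also have "\<dots> \<le> (1/2)^j * 1" using bwM[of j] dd_le1[of j] dd_pos[of j] bw_pos[of j] M(1)[of j]
      by (intro mult_mono) auto
    finally show ?thesis by simp
  qed
  have sumx: "summable (\<lambda>j. cc j *\<^sub>R yv j)"
  proof (rule summable_cmp[of _ "\<lambda>n. (1/2::real)^n"])
    show "summable (\<lambda>n. (1/2::real)^n)" by (rule summable_geometric) simp
    fix n :: nat
    have "norm (cc n *\<^sub>R yv n) = cc n * norm (yv n)" using cc_pos[of n] by simp
    also have "\<dots> \<le> (1/2)^n * dd n" by (rule ccy)
    also have "\<dots> \<le> (1/2)^n * 1" using dd_le1[of n] by (intro mult_left_mono) auto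
    finally show "norm (cc n *\<^sub>R yv n) \<le> (1/2) ^ n" by simp
  qed
  define x where "x = (\<Sum>j. cc j *\<^sub>R yv j)"
  have Rx: "R l x = (\<Sum>j. cc j *\<^sub>R R l (yv j))" if "l \<noteq> 0" for l
  proof -
    interpret rl: bounded_linear "R l" by (rule R_props(1)[OF that])
    show ?thesis unfolding x_def rl.suminf[OF sumx] by (simp add: rl.scale)
  qed
  have vb: "norm (cc j *\<^sub>R R l (yv j)) \<le> (1/2)^j * N l powr be j" if "l \<noteq> 0" "cmod l < r0" for l j
  proof -
    have "norm (cc j *\<^sub>R R l (yv j)) = cc j * norm (R l (yv j))" using cc_pos[of j] by simp
    also have "\<dots> \<le> cc j * (M j * N l powr be j)" using M(2)[OF that] cc_pos[of j]
      by (intro mult_left_mono) auto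
    also have "\<dots> = (cc j * M j) * N l powr be j" by simp
    also have "\<dots> \<le> (1/2)^j * N l powr be j" by (intro mult_right_mono ccM) auto
    finally show ?thesis .
  qed
  have vb2: "norm (cc j *\<^sub>R R l (yv j)) \<le> (1/2)^j * dd j * N l" if "l \<noteq> 0" for l j
  proof -
    have "norm (cc j *\<^sub>R R l (yv j)) = cc j * norm (R l (yv j))" using cc_pos[of j] by simp
    also have "\<dots> \<le> cc j * (N l * norm (yv j))" using R_le[OF that] cc_pos[of j]
      by (intro mult_left_mono) auto
    also have "\<dots> = (cc j * norm (yv j)) * N l" by simp
    also have "\<dots> \<le> (1/2)^j * dd j * N l" using N_nonneg[OF that] by (intro mult_right_mono ccy) auto
    finally show ?thesis .
  qed
  have Rx_upper: "norm (R l x) \<le> 2 * N l powr s" if l: "l \<noteq> 0" "cmod l < r0" for l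
  proof -
    have N1: "N l \<ge> 1" using r0(3)[OF l] by simp
    have "norm (R l x) = norm (\<Sum>j. cc j *\<^sub>R R l (yv j))" using Rx[OF l(1)] by simp
    also have "\<dots> \<le> (\<Sum>j. (1/2)^j * N l powr s)"
    proof (rule norm_suminf_le')
      show "norm (cc j *\<^sub>R R l (yv j)) \<le> (1/2)^j * N l powr s" for j
      proof -
        have "N l powr be j \<le> N l powr s" using N1 be_lt(4)[of j] by (intro powr_mono) auto
        hence "(1/2)^j * N l powr be j \<le> (1/2)^j * N l powr s" by (intro mult_left_mono) auto
        thus ?thesis using vb[OF l, of j] by linarith
      qed
      show "summable (\<lambda>j. (1/2::real)^j * N l powr s)"
        by (intro summable_mult2 summable_geometric) simp
    qed
    also have "\<dots> = 2 * N l powr s"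
      using suminf_mult2[OF summable_geometric[of "1/2::real"], of "N l powr s"] geom_suminf2 by simp
    finally show ?thesis .
  qed
  have norm_split: "norm b \<le> norm (a + (c + b)) + norm a + norm c" for a b c :: 'h
  proof -
    have "b = (a + (c + b)) - a - c" by simp
    hence "norm b = norm ((a + (c + b)) - a - c)" by simp
    also have "\<dots> \<le> norm ((a + (c + b)) - a) + norm c" by (rule norm_triangle_ineq4)
    also have "norm ((a + (c + b)) - a) \<le> norm (a + (c + b)) + norm a" by (rule norm_triangle_ineq4)
    finally show ?thesis by simp
  qed
  have Rx_lower: "norm (R (lmb n) x) \<ge> N (lmb n) powr be n" for n
  proof -
    define l where "l = lmb n"
    have Ql: "Q n (dd (Suc n)) l" unfolding l_def by (rule lmbQ)
    have l0: "l \<noteq> 0" and lr: "cmod l < r0" and Rlow: "N l powr pp n \<le> norm (R l (yv (Suc n)))"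
      and Q8: "8 * N l powr be n \<le> bw (Suc n) * dd (Suc n) * N l powr pp n"
      using Ql unfolding Q_def by auto
    have N2: "N l \<ge> 2" using r0(3)[OF l0 lr] .
    define v where "v j = cc j *\<^sub>R R l (yv j)" for j
    define QQ where "QQ = bw (Suc n) * dd (Suc n) * N l powr pp n"
    have sv: "summable v"
    proof (rule summable_cmp[of _ "\<lambda>j. (1/2)^j * N l"])
      show "norm (v j) \<le> (1/2)^j * N l" for j
      proof -
        have "(1/2)^j * dd j * N l \<le> (1/2)^j * 1 * N l" using dd_le1[of j] N2
          by (intro mult_right_mono mult_left_mono) auto
        hence m: "(1/2)^j * dd j * N l \<le> (1/2)^j * N l" by simp
        have "norm (v j) \<le> (1/2)^j * dd j * N l" using vb2[OF l0, of j] unfolding v_def .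
        thus ?thesis using m by linarith
      qed
      show "summable (\<lambda>j. (1/2::real)^j * N l)" by (intro summable_mult2 summable_geometric) simp
    qed
    have "R l x = suminf v" unfolding v_def using Rx[OF l0] by simp
    also have "\<dots> = (\<Sum>i. v (i + Suc (Suc n))) + (\<Sum>i<Suc (Suc n). v i)"
      by (rule suminf_split_initial_segment[OF sv])
    also have "(\<Sum>i<Suc (Suc n). v i) = (\<Sum>i<Suc n. v i) + v (Suc n)" by simp
    finally have dec: "R l x = (\<Sum>i. v (i + Suc (Suc n))) + ((\<Sum>i<Suc n. v i) + v (Suc n))" .
    have Tb: "norm (\<Sum>i. v (i + Suc (Suc n))) \<le> QQ / 2"
    proof -
      have "norm (\<Sum>i. v (i + Suc (Suc n))) \<le> (\<Sum>i. (1/2)^i * (dd (Suc (Suc n)) * N l))"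
      proof (rule norm_suminf_le')
        show "norm (v (i + Suc (Suc n))) \<le> (1/2)^i * (dd (Suc (Suc n)) * N l)" for i
        proof -
          have "(1/2::real)^(i + Suc (Suc n)) \<le> (1/2)^i" by (intro power_decreasing) auto
          moreover have "dd (i + Suc (Suc n)) \<le> dd (Suc (Suc n))" by (rule dd_anti) simp
          ultimately have "(1/2)^(i + Suc (Suc n)) * dd (i + Suc (Suc n)) * N l \<le> (1/2)^i * (dd (Suc (Suc n)) * N l)"
            using dd_pos[of "i + Suc (Suc n)"] N2
            by (simp add: mult.assoc) (intro mult_mono, auto)
          thus ?thesis using vb2[OF l0, of "i + Suc (Suc n)"] unfolding v_def by linarith
        qed
        show "summable (\<lambda>i. (1/2::real)^i * (dd (Suc (Suc n)) * N l))"
          by (intro summable_mult2 summable_geometric) simp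
      qed
      also have "\<dots> = 2 * (dd (Suc (Suc n)) * N l)"
        using suminf_mult2[OF summable_geometric[of "1/2::real"], of "dd (Suc (Suc n)) * N l"] geom_suminf2 by simp
      also have "\<dots> \<le> 2 * ((bw (Suc n) * dd (Suc n) * N l powr (pp n - 1) / 4) * N l)"
        using dd_SS[of n] N2 unfolding l_def by (intro mult_left_mono mult_right_mono) auto
      also have "\<dots> = QQ / 2"
      proof -
        have "N l powr (pp n - 1) * N l = N l powr pp n"
          using N2 by (simp add: powr_diff)
        thus ?thesis unfolding QQ_def by (simp add: field_simps)
      qed
      finally show ?thesis .
    qed
    have Sb: "norm (\<Sum>i<Suc n. v i) \<le> 2 * N l powr be n"
    proof -
      have "norm (\<Sum>i<Suc n. v i) \<le> (\<Sum>i<Suc n. (1/2)^i * N l powr be n)"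
      proof (rule sum_norm_le)
        fix i assume "i \<in> {..<Suc n}"
        hence "be i \<le> be n" by (intro be_mono) auto
        hence "N l powr be i \<le> N l powr be n" using N2 by (intro powr_mono) auto
        hence "(1/2)^i * N l powr be i \<le> (1/2)^i * N l powr be n" by (intro mult_left_mono) auto
        thus "norm (v i) \<le> (1/2)^i * N l powr be n" using vb[OF l0 lr, of i] unfolding v_def by linarith
      qed
      also have "\<dots> = (\<Sum>i<Suc n. (1/2::real)^i) * N l powr be n" by (rule sum_distrib_right[symmetric])
      also have "\<dots> \<le> 2 * N l powr be n" using geom_sum_le2[of "Suc n"] by (intro mult_right_mono) auto
      finally show ?thesis .
    qed
    have Vb: "norm (v (Suc n)) \<ge> QQ"
    proof -
      have "norm (v (Suc n)) = cc (Suc n) * norm (R l (yv (Suc n)))" using cc_pos[of "Suc n"] by (simp add: v_def)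
      also have "\<dots> \<ge> cc (Suc n) * N l powr pp n" using Rlow cc_pos[of "Suc n"] by (intro mult_left_mono) auto
      finally show ?thesis by (simp add: QQ_def cc_def)
    qed
    have "norm (v (Suc n)) \<le> norm (R l x) + norm (\<Sum>i. v (i + Suc (Suc n))) + norm (\<Sum>i<Suc n. v i)"
      unfolding dec by (rule norm_split)
    hence "QQ - QQ/2 - 2 * N l powr be n \<le> norm (R l x)" using Tb Sb Vb by linarith
    moreover have "N l powr be n \<ge> 0" by simp
    ultimately show ?thesis unfolding l_def[symmetric] using Q8[folded QQ_def] by linarith
  qed
  have lmb_small: "lmb n \<noteq> 0" "cmod (lmb n) < 1 / (real n + 1)" "cmod (lmb n) < r0" for n
    using lmbQ[of n] unfolding Q_def by auto
  have x0: "x \<noteq> 0"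
  proof
    assume "x = 0"
    hence "R (lmb 0) x = 0" using R_0[OF lmb_small(1)] by simp
    moreover have "N (lmb 0) powr be 0 > 0"
    proof -
      have "N (lmb 0) \<ge> 2" using r0(3)[OF lmb_small(1) lmb_small(3)] .
      thus ?thesis by simp
    qed
    ultimately show False using Rx_lower[of 0] by simp
  qed
  have "kx J T x = s"
  proof (rule kI)
    fix e :: real assume e: "e > 0"
    show "eventually (\<lambda>l. f x l \<le> s + e) (at 0)"
      using near0[OF r0(1)] lnN_big[of "ln 2 / e"]
    proof eventually_elim
      case (elim l)
      have l: "l \<noteq> 0" "cmod l < r0" using elim by auto
      have N2: "N l \<ge> 2" using r0(3)[OF l] .
      have "f x l \<le> s + ln 2 / ln (N l)" unfolding f_def
        using Rx_upper[OF l] N2 R_nz[OF l(1) x0] by (intro H_le) auto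
      also have "ln 2 / ln (N l) \<le> e"
      proof -
        have lN: "ln (N l) > 0" using N2 by simp
        have "ln 2 < e * ln (N l)" using elim e by (simp add: divide_less_eq mult.commute)
        thus ?thesis using lN by (simp add: divide_le_eq mult.commute)
      qed
      finally show ?case by simp
    qed
  next
    fix e :: real and P assume e: "e > 0" and P: "eventually P (at (0::complex))"
    obtain d where d: "d > 0" "\<And>l. l \<noteq> 0 \<Longrightarrow> dist l 0 < d \<Longrightarrow> P l"
      using P unfolding eventually_at by auto
    obtain n :: nat where n: "inverse (real (Suc n)) < min d e"
      using reals_Archimedean[of "min d e"] d e by auto
    have n': "1 / (real n + 1) < d" "1 / (real n + 1) < e"
      using n by (simp_all add: inverse_eq_divide add.commute)
    have Pl: "P (lmb n)" using d(2)[OF lmb_small(1)] lmb_small(2)[of n] n' by simp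
    have N2: "N (lmb n) \<ge> 2" using r0(3)[OF lmb_small(1) lmb_small(3)] .
    have "be n \<le> f x (lmb n)" unfolding f_def using Rx_lower[of n] N2 by (intro H_ge) auto
    moreover have "s - e < be n" using alY[of n] be_lt(1)[of n] n'(2) by linarith
    ultimately show "\<exists>l. P l \<and> s - e \<le> f x l" using Pl by (intro exI[of _ "lmb n"]) auto
  qed
  hence "Sup Y = kx J T x" unfolding s_def by simp
  thus ?thesis using x0 unfolding power_set_def by blast
qed

end

theorem theoremA:
  fixes J :: "'h::{real_inner, complete_space} \<Rightarrow> 'h" and T :: "'h \<Rightarrow> 'h"
  assumes "complex_structure J"
    and "separable_space (euclidean :: 'h topology)"
    and "\<not> (\<exists>B. finite B \<and> span B = (UNIV :: 'h set))"
    and "quasinilpotent J T"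
  shows "right_closed (power_set J T)"
proof -
  interpret qn J T using assms(1,4) by unfold_locales
  obtain v :: 'h where v: "v \<noteq> 0"
  proof -
    have "\<exists>v::'h. v \<noteq> 0"
    proof (rule ccontr)
      assume "\<not> (\<exists>v::'h. v \<noteq> 0)"
      hence "span {} = (UNIV :: 'h set)" by auto
      thus False using assms(3) by blast
    qed
    thus ?thesis using that by blast
  qed
  have ne: "power_set J T \<noteq> {}" using v unfolding power_set_def by blast
  show ?thesis unfolding right_closed_def
  proof (intro conjI allI impI ne)
    fix Y assume Y: "Y \<noteq> {} \<and> Y \<subseteq> power_set J T \<and> bdd_above Y \<and> bdd_below Y"
    show "Sup Y \<in> power_set J T"
    proof (cases "Sup Y \<in> Y")
      case True thus ?thesis using Y by blast
    next
      case False
      have "Y \<noteq> {}" "Y \<subseteq> power_set J T" "bdd_above Y" using Y by auto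
      thus ?thesis using main[OF _ _ _ False] by blast
    qed
  qed
qed

end
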